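(* Let $p$ be a prime and let $P_p=\sum_{k=0}^{p-2}a_kp^k$, with digits $a_k\in\{0,1,\dots,p-1\}$ (so $P_p<p^{p-1}$), be a positive period of the Bell numbers modulo $p$, i.e. $B_{n+P_p}\equiv B_n\pmod p$ for all $n\geq 0$ (not necessarily the minimal period). Then \[ \sum_{k=0}^{p-2}a_k\geq p+1. \]
   Context: $B_n$ is the $n$-th Bell number, the number of partitions of an $n$-element set into nonempty blocks. *)

theory Defs
  imports Main "HOL-Library.Disjoint_Sets" "HOL-Computational_Algebra.Primes"
begin

definition Bell :: "nat \<Rightarrow> nat" where
  "Bell n = card {P. partition_on {..<n} P}"

end

theory Submission
  imports Defs "HOL-Computational_Algebra.Polynomial"
begin

lemma card_part_le:
  assumes "inj_on f A" "f ` A = B" "finite B"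
  shows "card {P. partition_on A P} \<le> card {P. partition_on B P}"
proof (rule card_inj_on_le[where f = "\<lambda>P. (`) f ` P"])
  show "finite {P. partition_on B P}" using assms(3) by (rule finitely_many_partition_on)
  show "(\<lambda>P. (`) f ` P) ` {P. partition_on A P} \<subseteq> {P. partition_on B P}"
  proof safe
    fix P assume P: "partition_on A P"
    have "partition_on (f ` A) ((`) f ` P - {{}})" by (rule partition_on_inj_image[OF P assms(1)])
    moreover have "(`) f ` P - {{}} = (`) f ` P" using partition_onD3[OF P] by auto
    ultimately show "partition_on B ((`) f ` P)" using assms(2) by simp
  qed
  show "inj_on (\<lambda>P. (`) f ` P) {P. partition_on A P}"
  proof (rule inj_onI)
    fix P Q assume P: "P \<in> {P. partition_on A P}" and Q: "Q \<in> {P. partition_on A P}"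
      and e: "(`) f ` P = (`) f ` Q"
    have PA: "P \<subseteq> Pow A" and QA: "Q \<subseteq> Pow A" using P Q by (auto simp: partition_on_def)
    show "P = Q" using inj_on_image_eq_iff[OF inj_on_image_Pow[OF assms(1)] PA QA] e by simp
  qed
qed

lemma card_part_bij:
  assumes "bij_betw f A B" "finite A"
  shows "card {P. partition_on A P} = card {P. partition_on B P}"
proof (rule antisym)
  have fB: "finite B" using assms bij_betw_finite by blast
  show "card {P. partition_on A P} \<le> card {P. partition_on B P}"
    using assms fB by (intro card_part_le[of f]) (auto simp: bij_betw_def)
  have "bij_betw (inv_into A f) B A" using assms(1) by (rule bij_betw_inv_into)
  then show "card {P. partition_on B P} \<le> card {P. partition_on A P}"
    using assms by (intro card_part_le[of "inv_into A f"]) (auto simp: bij_betw_def)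
qed

lemma Bell_card:
  assumes "finite A"
  shows "card {P. partition_on A P} = Bell (card A)"
proof -
  obtain h where h: "bij_betw h {0..<card A} A" using ex_bij_betw_nat_finite[OF assms] by blast
  have "card {P. partition_on {..<card A} P} = card {P. partition_on A P}"
    using h by (intro card_part_bij) (auto simp: atLeast0LessThan)
  then show ?thesis by (simp add: Bell_def)
qed

lemma Bell_0: "Bell 0 = 1"
  by (simp add: Bell_def partition_on_empty)

lemma Bell_Suc: "Bell (Suc n) = (\<Sum>k\<le>n. (n choose k) * Bell k)"
proof -
  define A where "A = {..<n}"
  have nA: "n \<notin> A" and fA: "finite A" and cA: "card A = n" by (auto simp: A_def)
  have eqS: "{..<Suc n} = insert n A" by (auto simp: A_def)
  define \<Phi> where "\<Phi> = (\<lambda>(T::nat set, Q::nat set set). insert (insert n (A - T)) Q)"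
  define \<Psi> where "\<Psi> = (\<lambda>P::nat set set. ({x\<in>A. \<forall>b\<in>P. n \<in> b \<longrightarrow> x \<notin> b}, {b\<in>P. n \<notin> b}))"
  let ?S = "Sigma (Pow A) (\<lambda>T. {Q. partition_on T Q})"
  let ?P = "{P. partition_on (insert n A) P}"
  have bij: "bij_betw \<Phi> ?S ?P"
  proof (rule bij_betw_byWitness[where f' = \<Psi>])
    show "\<forall>a\<in>?S. \<Psi> (\<Phi> a) = a"
    proof
      fix a assume "a \<in> ?S"
      then obtain T Q where a: "a = (T, Q)" "T \<subseteq> A" "partition_on T Q" by auto
      have sub: "\<forall>b\<in>Q. b \<subseteq> T" using a(3) by (auto simp: partition_on_def)
      show "\<Psi> (\<Phi> a) = a" unfolding a \<Psi>_def \<Phi>_def using sub a(2) nA by auto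
    qed
    show "\<forall>P\<in>?P. \<Phi> (\<Psi> P) = P"
    proof
      fix P assume "P \<in> ?P"
      then have P: "partition_on (insert n A) P" by simp
      then obtain b0 where b0: "b0 \<in> P" "n \<in> b0" by (auto simp: partition_on_def)
      have uniq: "\<And>b. b \<in> P \<Longrightarrow> x \<in> b \<Longrightarrow> x \<in> b0 \<Longrightarrow> b = b0" for x
        using P b0(1) by (auto simp: partition_on_def disjoint_def)
      have b0s: "b0 \<subseteq> insert n A" using P b0 by (auto simp: partition_on_def)
      have "{x\<in>A. \<forall>b\<in>P. n \<in> b \<longrightarrow> x \<notin> b} = A - b0" using uniq b0 by blast
      moreover have "{b\<in>P. n \<notin> b} = P - {b0}" using uniq b0 by blast
      moreover have "insert n (A - (A - b0)) = b0" using b0s b0 by blast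
      ultimately show "\<Phi> (\<Psi> P) = P" unfolding \<Psi>_def \<Phi>_def using b0 by auto
    qed
    show "\<Phi> ` ?S \<subseteq> ?P"
    proof safe
      fix T Q assume T: "T \<subseteq> A" and Q: "partition_on T Q"
      have U: "\<Union>Q = T" using Q by (simp add: partition_on_def)
      have d: "disjnt (insert n (A - T)) (\<Union>Q)" using U nA T by (auto simp: disjnt_def)
      have e: "insert n A - insert n (A - T) = T" using T nA by auto
      show "partition_on (insert n A) (\<Phi> (T, Q))"
        unfolding \<Phi>_def using partition_on_insert[OF d] Q e by auto
    qed
    show "\<Psi> ` ?P \<subseteq> ?S"
    proof (rule image_subsetI)
      fix P assume "P \<in> ?P"
      then have P: "partition_on (insert n A) P" by simp
      then obtain b0 where b0: "b0 \<in> P" "n \<in> b0" by (auto simp: partition_on_def)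
      have uniq: "\<And>b. b \<in> P \<Longrightarrow> x \<in> b \<Longrightarrow> x \<in> b0 \<Longrightarrow> b = b0" for x
        using P b0(1) by (auto simp: partition_on_def disjoint_def)
      have b0s: "b0 \<subseteq> insert n A" using P b0 by (auto simp: partition_on_def)
      have 1: "{x\<in>A. \<forall>b\<in>P. n \<in> b \<longrightarrow> x \<notin> b} = A - b0" using uniq b0 by blast
      have 2: "{b\<in>P. n \<notin> b} = P - {b0}" using uniq b0 by blast
      have Pe: "P = insert b0 (P - {b0})" using b0 by auto
      have d: "disjnt b0 (\<Union>(P - {b0}))" using uniq by (auto simp: disjnt_def)
      have "partition_on (insert n A - b0) (P - {b0})"
        using partition_on_insert[OF d] P Pe by metis
      moreover have "insert n A - b0 = A - b0" using b0 by auto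
      ultimately show "\<Psi> P \<in> ?S"
        unfolding \<Psi>_def 1 2 by auto
    qed
  qed
  have "Bell (Suc n) = card ?P" unfolding Bell_def eqS ..
  also have "\<dots> = card ?S" using bij_betw_same_card[OF bij] by simp
  also have "\<dots> = (\<Sum>T\<in>Pow A. card {Q. partition_on T Q})"
    using fA by (intro card_SigmaI) (auto intro: finitely_many_partition_on finite_subset)
  also have "\<dots> = (\<Sum>T\<in>Pow A. Bell (card T))"
    using fA by (intro sum.cong refl Bell_card) (auto intro: finite_subset)
  also have "\<dots> = (\<Sum>k\<le>n. (\<Sum>T\<in>{T\<in>Pow A. card T = k}. Bell (card T)))"
    using fA cA by (intro sum.group[symmetric]) (auto intro: card_mono)
  also have "\<dots> = (\<Sum>k\<le>n. (n choose k) * Bell k)"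
  proof (rule sum.cong[OF refl])
    fix k
    have "(\<Sum>T\<in>{T\<in>Pow A. card T = k}. Bell (card T)) = (\<Sum>T\<in>{T\<in>Pow A. card T = k}. Bell k)"
      by (rule sum.cong) auto
    also have "\<dots> = card {B. B \<subseteq> A \<and> card B = k} * Bell k" by simp
    also have "\<dots> = (n choose k) * Bell k" using n_subsets[OF fA] cA by simp
    finally show "(\<Sum>T\<in>{T\<in>Pow A. card T = k}. Bell (card T)) = (n choose k) * Bell k" .
  qed
  finally show ?thesis .
qed

definition Lf :: "int poly \<Rightarrow> int" where
  "Lf g = (\<Sum>i\<le>degree g. coeff g i * int (Bell i))"

lemma Lf_bound: "degree g < N \<Longrightarrow> Lf g = (\<Sum>i<N. coeff g i * int (Bell i))"
  unfolding Lf_def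
  by (rule sum.mono_neutral_left) (auto simp: coeff_eq_0)

lemma Lf_add: "Lf (f + g) = Lf f + Lf g"
proof -
  define N where "N = Suc (degree f + degree g)"
  have "degree (f + g) < N" unfolding N_def using degree_add_le_max[of f g] by linarith
  then show ?thesis
    by (simp add: Lf_bound[of _ N] N_def sum.distrib distrib_right)
qed

lemma Lf_smult: "Lf (smult c g) = c * Lf g"
proof -
  have "degree (smult c g) < Suc (degree g)" using degree_smult_le[of c g] by linarith
  then show ?thesis
    by (simp add: Lf_bound[of _ "Suc (degree g)"] sum_distrib_left mult.assoc del: sum.lessThan_Suc)
qed

lemma Lf_uminus: "Lf (- g) = - Lf g"
  using Lf_smult[of "-1" g] by simp

lemma Lf_diff: "Lf (f - g) = Lf f - Lf g"
  using Lf_add[of f "-g"] Lf_uminus[of g] by simp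

lemma Lf_0: "Lf 0 = 0" by (simp add: Lf_def)

lemma Lf_sum: "Lf (sum f A) = (\<Sum>i\<in>A. Lf (f i))"
  by (induction A rule: infinite_finite_induct) (simp_all add: Lf_add Lf_0)

lemma Lf_monom: "Lf (monom c n) = c * int (Bell n)"
proof -
  have "degree (monom c n) < Suc n" using degree_monom_le[of c n] by linarith
  then have "Lf (monom c n) = (\<Sum>i<Suc n. coeff (monom c n) i * int (Bell i))" by (rule Lf_bound)
  also have "\<dots> = (\<Sum>i<Suc n. if i = n then c * int (Bell n) else 0)"
    by (rule sum.cong) (auto simp: coeff_monom)
  also have "\<dots> = c * int (Bell n)" by simp
  finally show ?thesis .
qed

lemma pCons0_monom: "pCons 0 (monom c n) = monom c (Suc n)"
  by (simp add: monom_Suc)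

lemma X_mult_monom: "[:0, 1:] * monom (c::int) n = monom c (Suc n)"
proof -
  have "[:0, 1::int:] = monom 1 1" by (simp add: monom_Suc one_pCons)
  then show ?thesis by (simp add: mult_monom)
qed

lemma pcompose_Xpow: "pcompose ([:0, 1:] ^ n) q = q ^ n"
  by (induction n) (auto simp: pcompose_mult pcompose_1 pcompose_pCons)

lemma Lf_lin_power: "Lf ([:1, 1:] ^ n) = (\<Sum>k\<le>n. int (n choose k) * int (Bell k))"
proof -
  have "degree ([:1::int, 1:] ^ n) < Suc n" by (simp add: degree_linear_power)
  then have "Lf ([:1, 1:] ^ n) = (\<Sum>i<Suc n. coeff ([:1, 1:] ^ n) i * int (Bell i))" by (rule Lf_bound)
  also have "\<dots> = (\<Sum>k\<le>n. int (n choose k) * int (Bell k))"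
    unfolding lessThan_Suc_atMost
    by (rule sum.cong) (auto simp: coeff_linear_poly_power)
  finally show ?thesis .
qed

lemma Lf_shift: "Lf ([:0, 1:] * q) = Lf (pcompose q [:1, 1:])"
proof -
  have q: "q = (\<Sum>i\<le>degree q. monom (coeff q i) i)" by (simp add: poly_as_sum_of_monoms)
  have "Lf ([:0, 1:] * q) = (\<Sum>i\<le>degree q. Lf ([:0, 1:] * monom (coeff q i) i))"
    by (subst q) (simp add: sum_distrib_left Lf_sum)
  also have "\<dots> = (\<Sum>i\<le>degree q. coeff q i * int (Bell (Suc i)))"
    by (simp add: X_mult_monom pCons0_monom Lf_monom)
  also have "\<dots> = (\<Sum>i\<le>degree q. coeff q i * (\<Sum>k\<le>i. int (i choose k) * int (Bell k)))"
    by (simp add: Bell_Suc)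
  also have "\<dots> = (\<Sum>i\<le>degree q. Lf (pcompose (monom (coeff q i) i) [:1, 1:]))"
    by (simp add: monom_altdef pcompose_smult pcompose_Xpow Lf_smult Lf_lin_power)
  also have "\<dots> = Lf (pcompose q [:1, 1:])"
    by (subst (2) q) (simp add: pcompose_sum Lf_sum)
  finally show ?thesis .
qed


definition ff :: "nat \<Rightarrow> int poly" where "ff m = (\<Prod>j<m. [:- int j, 1:])"

lemma ff_Suc_left: "ff (Suc m) = [:0, 1:] * pcompose (ff m) [:-1, 1:]"
proof -
  have "ff (Suc m) = [:0, 1:] * (\<Prod>j<m. [:- int (Suc j), 1:])"
    unfolding ff_def by (subst prod.lessThan_Suc_shift) simp
  also have "(\<Prod>j<m. [:- int (Suc j), 1:]) = pcompose (ff m) [:-1, 1:]"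
    unfolding ff_def pcompose_prod by (rule prod.cong) (simp_all add: pcompose_pCons)
  finally show ?thesis .
qed

lemma ff_Suc_right: "ff (Suc m) = ff m * [:- int m, 1:]"
  unfolding ff_def by simp

lemma Lf_ff: "Lf (ff m * q) = Lf (pcompose q [:int m, 1:])"
proof (induction m arbitrary: q)
  case 0
  then show ?case by (simp add: ff_def)
next
  case (Suc m)
  have e1: "pcompose [:-1, 1:] [:1, 1::int:] = [:0, 1:]" by (simp add: pcompose_pCons)
  have e2: "pcompose [:1, 1:] [:int m, 1:] = [:int (Suc m), 1:]" by (simp add: pcompose_pCons)
  have "Lf (ff (Suc m) * q) = Lf ([:0, 1:] * (pcompose (ff m) [:-1, 1:] * q))"
    by (simp add: ff_Suc_left mult.assoc)
  also have "\<dots> = Lf (pcompose (pcompose (ff m) [:-1, 1:] * q) [:1, 1:])" by (rule Lf_shift)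
  also have "\<dots> = Lf (ff m * pcompose q [:1, 1:])"
    by (simp add: pcompose_mult pcompose_assoc[symmetric] e1)
  also have "\<dots> = Lf (pcompose (pcompose q [:1, 1:]) [:int m, 1:])" by (rule Suc.IH)
  also have "\<dots> = Lf (pcompose q [:int (Suc m), 1:])"
    by (simp add: pcompose_assoc[symmetric] e2)
  finally show ?case .
qed

definition pz :: "nat \<Rightarrow> int poly \<Rightarrow> bool" where
  "pz p g \<longleftrightarrow> (\<exists>u. g = smult (int p) u)"

lemma pz_coeff: "pz p g \<longleftrightarrow> (\<forall>i. int p dvd coeff g i)"
proof
  assume "pz p g" then show "\<forall>i. int p dvd coeff g i" by (auto simp: pz_def)
next
  assume H: "\<forall>i. int p dvd coeff g i"
  have "g = smult (int p) (map_poly (\<lambda>c. c div int p) g)"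
    by (rule poly_eqI) (simp add: coeff_map_poly H)
  then show "pz p g" unfolding pz_def by blast
qed

lemma pz_add: "pz p a \<Longrightarrow> pz p b \<Longrightarrow> pz p (a + b)"
  unfolding pz_def by (metis smult_add_right)
lemma pz_diff: "pz p a \<Longrightarrow> pz p b \<Longrightarrow> pz p (a - b)"
  unfolding pz_def by (metis smult_diff_right)
lemma pz_mult: "pz p a \<Longrightarrow> pz p (h * a)"
  unfolding pz_def by (metis mult_smult_right)
lemma pz_pcompose: "pz p a \<Longrightarrow> pz p (pcompose a q)"
  unfolding pz_def by (metis pcompose_smult)
lemma pz_smult: "pz p (smult (int p) u)"
  unfolding pz_def by blast
lemma pz_0: "pz p 0"
  unfolding pz_def by (metis smult_0_right)
lemma pz_monom: "int p dvd c \<Longrightarrow> pz p (monom c n)"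
  by (auto simp: pz_coeff coeff_monom)
lemma pz_const: "int p dvd c \<Longrightarrow> pz p [:c:]"
  by (auto simp: pz_coeff coeff_pCons split: nat.split)
lemma pz_Lf: "pz p a \<Longrightarrow> int p dvd Lf a"
  unfolding pz_def by (auto simp: Lf_smult)
lemma pz_poly: "pz p a \<Longrightarrow> int p dvd poly a t"
  unfolding pz_def by auto
lemma pz_pCons0: "pz p a \<Longrightarrow> pz p (pCons 0 a)"
  by (auto simp: pz_coeff coeff_pCons split: nat.split)

lemma shift_pz: "pz p (pcompose h [:int p, 1:] - h)"
proof (induction h)
  case 0
  then show ?case by (simp add: pz_0)
next
  case (pCons a h)
  define H where "H = pcompose h [:int p, 1:]"
  have "pcompose (pCons a h) [:int p, 1:] - pCons a h = smult (int p) H + pCons 0 (H - h)"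
    by (simp add: pcompose_pCons H_def algebra_simps)
  moreover have "pz p (smult (int p) H + pCons 0 (H - h))"
    using pCons.IH by (intro pz_add pz_smult pz_pCons0) (simp add: H_def)
  ultimately show ?case by simp
qed

definition J :: "nat \<Rightarrow> int poly \<Rightarrow> bool" where
  "J p g \<longleftrightarrow> (\<forall>h. int p dvd Lf (h * g))"

lemma J_add: "J p a \<Longrightarrow> J p b \<Longrightarrow> J p (a + b)"
  unfolding J_def by (simp add: distrib_left Lf_add)
lemma J_diff: "J p a \<Longrightarrow> J p b \<Longrightarrow> J p (a - b)"
  unfolding J_def by (simp add: right_diff_distrib Lf_diff)
lemma J_uminus: "J p a \<Longrightarrow> J p (- a)"
  unfolding J_def by (simp add: Lf_uminus)
lemma J_mult: "J p a \<Longrightarrow> J p (u * a)"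
  unfolding J_def by (metis mult.assoc)
lemma J_pz: "pz p a \<Longrightarrow> J p a"
  unfolding J_def by (simp add: pz_Lf pz_mult)
lemma J_0: "J p 0"
  unfolding J_def by (simp add: Lf_0)
lemma J_const: "J p [:c:] \<Longrightarrow> int p dvd c"
  unfolding J_def by (drule spec[of _ 1]) (simp add: Lf_def Bell_0)

lemma J_shift: "J p g \<Longrightarrow> J p (pcompose g [:1, 1:])"
  unfolding J_def
proof (intro allI impI)
  fix h :: "int poly" assume H: "\<forall>h. int p dvd Lf (h * g)"
  define h' where "h' = pcompose h [:-1, 1:]"
  have e1: "pcompose [:-1, 1:] [:1, 1::int:] = [:0, 1:]" by (simp add: pcompose_pCons)
  have "h = pcompose h (pcompose [:-1, 1:] [:1, 1::int:])" by (simp add: pcompose_pCons)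
  also have "\<dots> = pcompose h' [:1, 1:]" by (simp only: h'_def pcompose_assoc)
  finally have "h = pcompose h' [:1, 1:]" .
  then have "Lf (h * pcompose g [:1, 1:]) = Lf (pcompose (h' * g) [:1, 1:])"
    by (simp add: pcompose_mult)
  also have "\<dots> = Lf (([:0, 1:] * h') * g)" by (simp add: Lf_shift[symmetric] mult.assoc)
  finally have e: "Lf (h * pcompose g [:1, 1:]) = Lf (([:0, 1:] * h') * g)" .
  show "int p dvd Lf (h * pcompose g [:1, 1:])" unfolding e by (rule H[rule_format])
qed

definition dlt :: "int poly \<Rightarrow> int poly" where "dlt g = pcompose g [:1, 1:] - g"

lemma J_dlt: "J p g \<Longrightarrow> J p (dlt g)"
  unfolding dlt_def by (intro J_diff J_shift)

lemma coeff_lin_pow: "coeff ([:1, 1::int:] ^ i) k = int (i choose k)"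
proof (cases "k \<le> i")
  case True then show ?thesis by (simp add: coeff_linear_poly_power)
next
  case False then show ?thesis by (simp add: coeff_eq_0 degree_linear_power)
qed

lemma coeff_shift1:
  assumes "\<forall>i>n. coeff g i = 0"
  shows "coeff (pcompose g [:1, 1:]) k = (\<Sum>i\<le>n. coeff g i * int (i choose k))"
proof -
  have "degree g \<le> n" using assms by (intro degree_le) auto
  then have g: "g = (\<Sum>i\<le>n. monom (coeff g i) i)" by (simp add: poly_as_sum_of_monoms')
  show ?thesis
    by (subst g) (simp add: pcompose_sum coeff_sum monom_altdef pcompose_smult pcompose_Xpow coeff_lin_pow)
qed

lemma sum_choose_top:
  assumes "m \<le> k"
  shows "(\<Sum>i\<le>m. f i * int (i choose k)) = (if k = m then f m else 0)"
proof -
  have "(\<Sum>i\<le>m. f i * int (i choose k)) = (\<Sum>i\<le>m. if i = k then f i else 0)"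
    using assms by (intro sum.cong) auto
  also have "\<dots> = (if k = m then f m else 0)" using assms by (simp add: sum.delta)
  finally show ?thesis .
qed

lemma dlt_coeffs:
  assumes "\<forall>i>Suc n. coeff g i = 0"
  shows "\<forall>i>n. coeff (dlt g) i = 0" "coeff (dlt g) n = int (Suc n) * coeff g (Suc n)"
proof -
  show "\<forall>i>n. coeff (dlt g) i = 0"
  proof safe
    fix i assume "i > n"
    then have "Suc n \<le> i" by simp
    then show "coeff (dlt g) i = 0"
      using assms by (cases "i = Suc n") (auto simp: dlt_def coeff_shift1[OF assms] sum_choose_top)
  qed
  have "coeff (dlt g) n = (\<Sum>i\<le>n. coeff g i * int (i choose n)) + coeff g (Suc n) * int (Suc n) - coeff g n"
    by (simp add: dlt_def coeff_shift1[OF assms])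
  also have "\<dots> = int (Suc n) * coeff g (Suc n)" by (simp add: sum_choose_top)
  finally show "coeff (dlt g) n = int (Suc n) * coeff g (Suc n)" .
qed

lemma dlt_pow:
  assumes "\<forall>i>n. coeff g i = 0"
  shows "(dlt ^^ n) g = [:fact n * coeff g n:]"
  using assms
proof (induction n arbitrary: g)
  case 0
  then show ?case by (intro poly_eqI) (auto simp: coeff_pCons split: nat.split)
next
  case (Suc n)
  have "(dlt ^^ Suc n) g = (dlt ^^ n) (dlt g)" by (simp add: funpow_swap1)
  also have "\<dots> = [:fact n * coeff (dlt g) n:]" using Suc.IH dlt_coeffs(1)[OF Suc.prems] by blast
  also have "\<dots> = [:fact (Suc n) * coeff g (Suc n):]"
    using dlt_coeffs(2)[OF Suc.prems] by (simp add: fact_Suc)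
  finally show ?case .
qed

lemma gen:
  fixes S :: "int poly \<Rightarrow> bool"
  assumes p: "prime p"
    and S_diff: "\<And>a b. S a \<Longrightarrow> S b \<Longrightarrow> S (a - b)"
    and S_pz: "\<And>g. pz p g \<Longrightarrow> S g"
    and S_dlt: "\<And>g. S g \<Longrightarrow> S (dlt g)"
    and S_const: "\<And>c. S [:c:] \<Longrightarrow> int p dvd c"
  shows "d \<le> p \<Longrightarrow> \<forall>i\<ge>d. coeff g i = 0 \<Longrightarrow> S g \<Longrightarrow> pz p g"
proof (induction d arbitrary: g)
  case 0
  then have "g = 0" by (intro poly_eqI) auto
  then show ?case by (simp add: pz_0)
next
  case (Suc d)
  have z: "\<forall>i>d. coeff g i = 0" using Suc.prems by auto
  have "S ((dlt ^^ k) g)" for k by (induction k) (auto simp: Suc.prems S_dlt)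
  then have "S [:fact d * coeff g d:]" using dlt_pow[OF z] by metis
  then have dv: "int p dvd fact d * coeff g d" by (rule S_const)
  have pi: "prime (int p)" using p by (simp add: prime_nat_int_transfer)
  have "\<not> p dvd fact d" using p Suc.prems by (simp add: prime_dvd_fact_iff)
  then have "\<not> int p dvd fact d" by (metis of_nat_fact int_dvd_int_iff)
  then have dc: "int p dvd coeff g d" using dv pi by (simp add: prime_dvd_mult_iff)
  define g' where "g' = g - monom (coeff g d) d"
  have "S g'" unfolding g'_def using Suc.prems(3) S_pz[OF pz_monom[OF dc]] by (rule S_diff)
  moreover have "\<forall>i\<ge>d. coeff g' i = 0" using z by (auto simp: g'_def coeff_monom)
  ultimately have "pz p g'" using Suc.IH Suc.prems by simp
  then have "pz p (g' + monom (coeff g d) d)" using dc by (intro pz_add pz_monom)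
  moreover have "g' + monom (coeff g d) d = g" by (simp add: g'_def)
  ultimately show ?case by simp
qed


lemma ff_coeffs: "coeff (ff m) m = 1 \<and> (\<forall>i>m. coeff (ff m) i = 0)"
proof (induction m)
  case 0
  then show ?case by (auto simp: ff_def coeff_pCons split: nat.split)
next
  case (Suc m)
  have e: "ff (Suc m) = smult (- int m) (ff m) + pCons 0 (ff m)"
    by (simp add: ff_Suc_right mult.commute)
  show ?case unfolding e using Suc.IH by (auto simp: coeff_pCons split: nat.split)
qed

lemma frob_pz:
  assumes p: "prime p"
  shows "pz p ([:c, 1:] ^ p - [:0, 1:] ^ p - [:c ^ p:])"
proof -
  have p0: "p > 0" using p prime_gt_0_nat by blast
  have Xp: "[:0, 1::int:] ^ p = monom 1 p" by (simp add: monom_altdef)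
  show ?thesis unfolding pz_coeff Xp
  proof
    fix i
    consider "i = 0" | "0 < i" "i < p" | "i = p" | "i > p" by linarith
    then show "int p dvd coeff ([:c, 1:] ^ p - monom 1 p - [:c ^ p:]) i"
    proof cases
      case 1 then show ?thesis using p0 by (simp add: coeff_linear_poly_power)
    next
      case 2
      have "p dvd (p choose i)" using 2 p by (intro dvd_choose_prime) auto
      then have "int p dvd int (p choose i)" by simp
      then show ?thesis using 2 by (auto simp: coeff_linear_poly_power coeff_monom coeff_pCons split: nat.split)
    next
      case 3 then show ?thesis using p0 by (simp add: coeff_linear_poly_power coeff_monom coeff_pCons split: nat.split)
    next
      case 4 then show ?thesis
        by (simp add: coeff_eq_0 degree_linear_power coeff_monom coeff_pCons split: nat.split)
    qed
  qed
qed

lemma fermat_int: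
  assumes p: "prime p"
  shows "int p dvd int k ^ p - int k"
proof (induction k)
  case 0
  then show ?case using p prime_gt_0_nat by (simp add: power_0_left)
next
  case (Suc k)
  have "int p dvd poly ([:int k, 1:] ^ p - [:0, 1:] ^ p - [:int k ^ p:]) 1"
    by (rule pz_poly[OF frob_pz[OF p]])
  then have "int p dvd (int k + 1) ^ p - 1 - int k ^ p" by simp
  then have "int p dvd ((int k + 1) ^ p - 1 - int k ^ p) + (int k ^ p - int k)"
    using Suc.IH by (rule dvd_add)
  then show ?case by (simp add: algebra_simps)
qed

lemma pcompose_ff_shift: "pcompose (ff (Suc m)) [:1, 1:] = [:1, 1:] * ff m"
proof -
  have "pcompose (ff (Suc m)) [:1, 1:] = (\<Prod>j<Suc m. pcompose [:- int j, 1:] [:1, 1:])"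
    unfolding ff_def pcompose_prod ..
  also have "\<dots> = pcompose [:0, 1:] [:1, 1:] * (\<Prod>j<m. pcompose [:- int (Suc j), 1:] [:1, 1:])"
    by (subst prod.lessThan_Suc_shift) simp
  also have "(\<Prod>j<m. pcompose [:- int (Suc j), 1:] [:1, 1:]) = ff m"
    unfolding ff_def by (rule prod.cong) (simp_all add: pcompose_pCons)
  finally show ?thesis by (simp add: pcompose_pCons)
qed

lemma touchard_J:
  assumes p: "prime p"
  shows "J p ([:0, 1:] ^ p - [:0, 1:] - 1)"
proof -
  obtain m where pm: "p = Suc m" using p prime_gt_0_nat by (metis gr0_implies_Suc)
  define E where "E = ff p - [:0, 1:] ^ p + [:0, 1:]"
  define S where "S = (\<lambda>g. pz p (dlt g) \<and> int p dvd poly g 0)"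
  have dlt_diff: "dlt (a - b) = dlt a - dlt b" for a b by (simp add: dlt_def pcompose_diff)
  have SE: "S E"
  proof -
    have a: "pz p (dlt (ff p))"
    proof -
      have "dlt (ff p) = [:1, 1:] * ff m - ff m * [:- int m, 1:]"
        unfolding dlt_def pm pcompose_ff_shift by (simp only: ff_Suc_right)
      also have "\<dots> = smult (int p) (ff m)"
        by (simp add: pm mult.commute[of "ff m"] algebra_simps smult_add_left)
      finally show ?thesis by (simp add: pz_smult)
    qed
    have b: "pz p ([:1, 1:] ^ p - [:0, 1:] ^ p - [:1:])" using frob_pz[OF p, of 1] by simp
    have "dlt E = dlt (ff p) - ([:1, 1:] ^ p - [:0, 1:] ^ p - [:1:])"
      by (simp add: E_def dlt_def pcompose_diff pcompose_add pcompose_Xpow pcompose_pCons one_pCons)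
    then have "pz p (dlt E)" using a b by (simp add: pz_diff)
    moreover have "poly (ff p) 0 = 0"
      unfolding ff_def poly_prod using pm by (auto simp: prod_zero_iff)
    ultimately show ?thesis using pm by (simp add: S_def E_def)
  qed
  have zE: "\<forall>i\<ge>p. coeff E i = 0"
  proof safe
    fix i assume "p \<le> i"
    moreover have "p \<ge> 2" using p prime_ge_2_nat by blast
    moreover have Xp: "[:0, 1::int:] ^ p = monom 1 p" by (simp add: monom_altdef)
    ultimately show "coeff E i = 0" using ff_coeffs[of p]
      by (cases "i = p") (auto simp: E_def Xp coeff_pCons coeff_monom split: nat.split)
  qed
  have "pz p E"
  proof (rule gen[OF p, of S, OF _ _ _ _ order.refl zE SE])
    show "S (a - b)" if "S a" "S b" for a b
      using that by (auto simp: S_def dlt_diff pz_diff dvd_diff)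
    show "S g" if "pz p g" for g
      using that by (auto simp: S_def dlt_def pz_diff pz_pcompose pz_poly)
    show "S (dlt g)" if "S g" for g
    proof -
      have a: "pz p (dlt g)" using that by (simp add: S_def)
      then have "pz p (dlt (dlt g))" unfolding dlt_def[of "dlt g"] by (intro pz_diff pz_pcompose)
      then show ?thesis using pz_poly[OF a] by (simp add: S_def)
    qed
    show "int p dvd c" if "S [:c:]" for c
      using that by (simp add: S_def)
  qed
  moreover have "J p (ff p - 1)"
    unfolding J_def
  proof
    fix h
    have "Lf (h * ff p) = Lf (pcompose h [:int p, 1:])"
      using Lf_ff[of p h] by (simp only: mult.commute)
    then have "Lf (h * (ff p - 1)) = Lf (pcompose h [:int p, 1:] - h)"
      by (simp add: right_diff_distrib Lf_diff)
    then show "int p dvd Lf (h * (ff p - 1))" using pz_Lf[OF shift_pz] by simp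
  qed
  ultimately have "J p ((ff p - 1) - E)" by (metis J_diff J_pz)
  moreover have "(ff p - 1) - E = [:0, 1:] ^ p - [:0, 1:] - 1" by (simp add: E_def)
  ultimately show ?thesis by simp
qed


lemma J_pow_diff: "J p (a - b) \<Longrightarrow> J p (a ^ n - b ^ n)"
proof (induction n)
  case 0 then show ?case by (simp add: J_0)
next
  case (Suc n)
  have "a ^ Suc n - b ^ Suc n = a * (a ^ n - b ^ n) + b ^ n * (a - b)"
    by (simp add: algebra_simps)
  then show ?case using Suc by (simp add: J_add J_mult)
qed

lemma J_prod_diff: "(\<And>i. i \<in> A \<Longrightarrow> J p (f i - g i)) \<Longrightarrow> J p (prod f A - prod g A)"
proof (induction A rule: infinite_finite_induct)
  case (infinite A) then show ?case by (simp add: J_0)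
next
  case empty then show ?case by (simp add: J_0)
next
  case (insert x A)
  have "prod f (insert x A) - prod g (insert x A) = f x * (prod f A - prod g A) + prod g A * (f x - g x)"
    using insert.hyps by (simp add: algebra_simps)
  then show ?case using insert by (simp add: J_add J_mult)
qed

lemma Xpow_J:
  assumes p: "prime p"
  shows "J p ([:0, 1:] ^ (p ^ k) - [:int k, 1:])"
proof (induction k)
  case 0 then show ?case by (simp add: J_0)
next
  case (Suc k)
  define a where "a = [:0, 1::int:] ^ (p ^ k)"
  define b where "b = [:int k, 1:]"
  have 1: "J p (a ^ p - b ^ p)" using Suc.IH unfolding a_def b_def by (rule J_pow_diff)
  have 2: "J p (b ^ p - [:0, 1:] ^ p - [:int k ^ p:])" unfolding b_def by (rule J_pz[OF frob_pz[OF p]])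
  have 3: "J p ([:0, 1:] ^ p - [:0, 1:] - 1)" by (rule touchard_J[OF p])
  have "int p dvd int k ^ p - int k" by (rule fermat_int[OF p])
  then have "pz p [:int k ^ p - int k:]" by (rule pz_const)
  moreover have "[:int k ^ p:] - [:int k:] = [:int k ^ p - int k:]" by simp
  ultimately have 4: "J p ([:int k ^ p:] - [:int k:])" by (simp add: J_pz)
  have eq: "[:0, 1::int:] ^ (p ^ Suc k) - [:int (Suc k), 1:] =
    (a ^ p - b ^ p) + (b ^ p - [:0, 1:] ^ p - [:int k ^ p:]) + ([:0, 1:] ^ p - [:0, 1:] - 1)
    + ([:int k ^ p:] - [:int k:])"
    by (simp add: a_def b_def power_mult[symmetric] mult.commute one_pCons)
  show ?case unfolding eq by (intro J_add 1 2 3 4)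
qed

theorem theorem3:
  fixes p P :: nat and a :: "nat \<Rightarrow> nat"
  assumes "prime p"
    and "\<And>k. k \<le> p - 2 \<Longrightarrow> a k < p"
    and "P = (\<Sum>k = 0..p - 2. a k * p ^ k)"
    and "P > 0"
    and "\<And>n. Bell (n + P) mod p = Bell n mod p"
  shows "(\<Sum>k = 0..p - 2. a k) \<ge> p + 1"
proof (rule ccontr)
  note p = assms(1)
  define K where "K = {0..p - 2}"
  define s where "s = (\<Sum>k\<in>K. a k)"
  assume "\<not> ?thesis"
  then have sp: "s \<le> p" by (simp add: s_def K_def)
  define Q where "Q = (\<Prod>k\<in>K. [:int k, 1:] ^ a k)"
  have XP: "[:0, 1::int:] ^ P = (\<Prod>k\<in>K. ([:0, 1:] ^ (p ^ k)) ^ a k)"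
    by (simp add: assms(3) K_def power_sum power_mult[symmetric] mult.commute)
  have J1: "J p ([:0, 1:] ^ P - Q)"
    unfolding XP Q_def by (intro J_prod_diff J_pow_diff Xpow_J[OF p])
  have J2: "J p ([:0, 1:] ^ P - 1)"
    unfolding J_def
  proof
    fix h :: "int poly"
    have hs: "h = (\<Sum>i\<le>degree h. monom (coeff h i) i)" by (simp add: poly_as_sum_of_monoms)
    have XPm: "[:0, 1::int:] ^ P = monom 1 P" by (simp add: monom_altdef)
    have "Lf (h * ([:0, 1:] ^ P - 1)) = Lf (h * monom 1 P) - Lf h"
      by (simp add: XPm right_diff_distrib Lf_diff)
    also have "\<dots> = (\<Sum>i\<le>degree h. coeff h i * (int (Bell (i + P)) - int (Bell i)))"
      by (subst (1 2) hs) (simp add: sum_distrib_right Lf_sum mult_monom Lf_monom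
            sum_subtractf right_diff_distrib)
    finally have e: "Lf (h * ([:0, 1:] ^ P - 1)) = \<dots>" .
    have "int p dvd int (Bell (i + P)) - int (Bell i)" for i
    proof -
      have "int (Bell (i + P)) mod int p = int (Bell i) mod int p"
        using assms(5)[of i] by (metis of_nat_mod)
      then show ?thesis by (simp add: mod_eq_dvd_iff)
    qed
    then show "int p dvd Lf (h * ([:0, 1:] ^ P - 1))" unfolding e
      by (intro dvd_sum dvd_mult) auto
  qed
  have JQ: "J p (Q - 1)"
  proof -
    have e: "Q - 1 = ([:0, 1:] ^ P - 1) - ([:0, 1:] ^ P - Q)" by simp
    show ?thesis unfolding e by (rule J_diff[OF J2 J1])
  qed
  have JdQ: "J p (dlt Q)"
  proof -
    have "dlt (Q - 1) = dlt Q" by (simp add: dlt_def pcompose_diff pcompose_1)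
    then show ?thesis using J_dlt[OF JQ] by simp
  qed
  have degQ: "degree Q \<le> s"
  proof -
    have "degree Q \<le> (\<Sum>k\<in>K. degree ([:int k, 1:] ^ a k))"
      unfolding Q_def using degree_prod_sum_le[of K] by (simp add: K_def o_def)
    also have "\<dots> = s" by (simp add: s_def degree_linear_power)
    finally show ?thesis .
  qed
  obtain m where pm: "p = Suc m" using p prime_gt_0_nat by (metis gr0_implies_Suc)
  have "\<forall>i>Suc m. coeff Q i = 0" using degQ sp pm by (auto intro: coeff_eq_0)
  then have zd: "\<forall>i\<ge>p. coeff (dlt Q) i = 0" using dlt_coeffs(1) pm by auto
  have pzQ: "pz p (dlt Q)"
    by (rule gen[OF p, of "J p", OF J_diff J_pz J_dlt J_const order.refl zd JdQ])
  have step: "int p dvd poly Q (t + 1) - poly Q t" for t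
    using pz_poly[OF pzQ, of t] by (simp add: dlt_def poly_pcompose add.commute)
  have stepm: "int p dvd poly Q (t + int n) - poly Q t" for t n
  proof (induction n)
    case 0 then show ?case by simp
  next
    case (Suc n)
    have e: "poly Q (t + int (Suc n)) - poly Q t = (poly Q (t + int n + 1) - poly Q (t + int n)) + (poly Q (t + int n) - poly Q t)"
      by (simp add: ac_simps)
    show ?case unfolding e by (rule dvd_add[OF step[of "t + int n"] Suc.IH])
  qed
  obtain k0 where k0: "k0 \<in> K" "a k0 > 0"
  proof -
    have "\<exists>k\<in>K. a k > 0"
    proof (rule ccontr)
      assume "\<not> (\<exists>k\<in>K. a k > 0)"
      then have "P = 0" by (simp add: assms(3) K_def)
      then show False using assms(4) by simp
    qed
    then show ?thesis using that by blast
  qed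
  have fK: "finite K" by (simp add: K_def)
  have Q0: "poly Q (- int k0) = 0"
    unfolding Q_def poly_prod using k0 fK by (auto simp: prod_zero_iff)
  have e1: "- int k0 + int (Suc k0) = 1" by simp
  have "int p dvd poly Q (- int k0 + int (Suc k0)) - poly Q (- int k0)" by (rule stepm)
  then have "int p dvd poly Q 1" unfolding e1 Q0 by simp
  moreover have "poly Q 1 = (\<Prod>k\<in>K. (int k + 1) ^ a k)"
    unfolding Q_def poly_prod by (intro prod.cong refl) simp
  ultimately have dvP: "int p dvd (\<Prod>k\<in>K. (int k + 1) ^ a k)" by (simp only:)
  have pi: "prime (int p)" using p by (simp add: prime_nat_int_transfer)
  have "\<exists>k\<in>K. int p dvd (int k + 1) ^ a k"
    using dvP by (subst (asm) prime_dvd_prod_iff[OF fK pi])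
  then obtain k where k: "k \<in> K" "int p dvd (int k + 1) ^ a k" by (elim bexE)
  have "int p dvd int k + 1" by (rule prime_dvd_power[OF pi k(2)])
  then have "int p \<le> int k + 1" by (intro zdvd_imp_le) auto
  moreover have "k \<le> p - 2" using k by (simp add: K_def)
  moreover have "p \<ge> 2" using p prime_ge_2_nat by blast
  ultimately show False by linarith
qed

end
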